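(* Let $N\ge2$ and $t>0$, and define, for $\boldsymbol{v}\in\mathbb{R}^N$ with pairwise distinct components, $$F_N(\boldsymbol{v},t)=\frac N2(N-1)(1-\log t)-\sum_{j=1}^Nj\log j+2\log|h_N(\boldsymbol{v})|-\frac{|\boldsymbol{v}|^2}{2t},\qquad h_N(\boldsymbol{v})=\prod_{1\le i<j\le N}(v_j-v_i).$$ Then the maximum value of $F_N(\cdot,t)$ is zero; in particular $F_N(\sqrt{2t}\,\rho\boldsymbol{z}_N,t)=0$ for every $\rho\in S_N$, where $\boldsymbol{z}_N$ is the vector of roots of the $N$-th Hermite polynomial $H_N(x)=(-1)^Ne^{x^2}\frac{d^N}{dx^N}e^{-x^2}$ and $\rho\boldsymbol{z}_N=(z_{\rho(1),N},\dots,z_{\rho(N),N})$. *)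

theory Defs
  imports "HOL-Analysis.Analysis" "HOL-Combinatorics.Permutations"
begin

definition hermite :: "nat \<Rightarrow> real \<Rightarrow> real" where
  "hermite N x = (-1) ^ N * exp (x\<^sup>2) * ((deriv ^^ N) (\<lambda>y. exp (- y\<^sup>2)) x)"

text \<open>Vectors in R^N are functions nat => real indexed by {1..N}.\<close>
definition hN :: "nat \<Rightarrow> (nat \<Rightarrow> real) \<Rightarrow> real" where
  "hN N v = (\<Prod>j\<in>{1..N}. \<Prod>i\<in>{1..<j}. v j - v i)"

definition FN :: "nat \<Rightarrow> (nat \<Rightarrow> real) \<Rightarrow> real \<Rightarrow> real" where
  "FN N v t = real N / 2 * (real N - 1) * (1 - ln t)
     - (\<Sum>j=1..N. real j * ln (real j))
     + 2 * ln \<bar>hN N v\<bar>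
     - (\<Sum>j=1..N. (v j)\<^sup>2) / (2 * t)"

end

theory Submission
  imports Defs "HOL-Computational_Algebra.Polynomial"
begin


fun herm :: "nat \<Rightarrow> real poly" where
  "herm 0 = 1"
| "herm (Suc 0) = [:0, 2:]"
| "herm (Suc (Suc n)) = [:0, 2:] * herm (Suc n) - smult (2 * (real n + 1)) (herm n)"

lemma herm_rec: "poly (herm (Suc (Suc n))) x = 2*x*poly (herm (Suc n)) x - 2*(real n+1)*poly (herm n) x"
  by simp

lemmas herm_SS = herm.simps(3)
declare herm.simps(3)[simp del]

lemma pderiv_herm_aux:
  "pderiv (herm (Suc n)) = smult (2*(real n+1)) (herm n) \<and>
   pderiv (herm (Suc (Suc n))) = smult (2*(real n+2)) (herm (Suc n))"
proof (induction n)
  case 0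
  then show ?case by (simp add: pderiv_mult pderiv_pCons pderiv_diff herm_SS)
next
  case (Suc n)
  have A: "pderiv (herm (Suc n)) = smult (2*(real n+1)) (herm n)" 
   and B: "pderiv (herm (Suc (Suc n))) = smult (2*(real n+2)) (herm (Suc n))" using Suc by auto
  have "pderiv (herm (Suc(Suc(Suc n)))) = smult (2*(real (Suc n)+2)) (herm (Suc (Suc n)))"
  proof -
    have "pderiv (herm (Suc(Suc(Suc n)))) = [:0,2:] * smult (2*(real n+2)) (herm (Suc n)) + smult 2 (herm (Suc (Suc n))) - smult (2*(real (Suc n)+1)) (smult (2*(real n+1)) (herm n))"
      by (simp add: herm_SS[of "Suc n"] pderiv_mult pderiv_diff pderiv_smult A B pderiv_pCons)
    also have "\<dots> = smult (2*(real (Suc n)+2)) (herm (Suc (Suc n)))"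
      by (simp add: herm_SS[of n] poly_eq_poly_eq_iff[symmetric] fun_eq_iff algebra_simps)
    finally show ?thesis .
  qed
  then show ?case using B by (simp add: algebra_simps)
qed

lemma pderiv_herm: "pderiv (herm (Suc n)) = smult (2*(real n+1)) (herm n)"
  using pderiv_herm_aux by blast

lemma herm_ode: "poly (pderiv (pderiv (herm n))) x = 2*x*poly (pderiv (herm n)) x - 2*real n*poly (herm n) x"
proof (cases n)
  case 0 then show ?thesis by simp
next
  case (Suc m)
  then show ?thesis
  proof (cases m)
    case 0 then show ?thesis using Suc by (simp add: pderiv_pCons)
  next
    case (Suc k)
    then show ?thesis using \<open>n = Suc m\<close> by (simp add: pderiv_herm pderiv_smult herm_rec algebra_simps)
  qed
qed

lemma herm_parity_aux: "poly (herm n) (-x) = (-1)^n * poly (herm n) x \<and> poly (herm (Suc n)) (-x) = (-1)^(Suc n) * poly (herm (Suc n)) x"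
  by (induction n) (simp_all add: herm_rec algebra_simps)

lemma herm_parity: "poly (herm n) (-x) = (-1)^n * poly (herm n) x"
  using herm_parity_aux by blast

lemma herm_deg_aux: "(degree (herm n) \<le> n \<and> coeff (herm n) n = 2^n) \<and> (degree (herm (Suc n)) \<le> Suc n \<and> coeff (herm (Suc n)) (Suc n) = 2^(Suc n))"
proof (induction n)
  case 0
  then show ?case by simp
next
  case (Suc n)
  have m: "[:0, 2:] * p = pCons 0 (smult 2 p)" for p :: "real poly" by (simp add: mult_pCons_left)
  have d1: "degree (pCons 0 (smult 2 (herm (Suc n)))) \<le> Suc (Suc n)"
    using Suc by (simp add: degree_pCons_eq_if)
  have d2: "degree (smult (2 * (real n + 1)) (herm n)) \<le> Suc (Suc n)"
    using Suc by (meson degree_smult_le le_SucI order_trans)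
  have "degree (herm (Suc (Suc n))) \<le> Suc (Suc n)"
    unfolding herm_SS m using d1 d2 by (meson degree_diff_le)
  moreover have "coeff (herm (Suc (Suc n))) (Suc (Suc n)) = 2^(Suc (Suc n))"
    using Suc by (simp add: herm_SS m coeff_eq_0)
  ultimately show ?case using Suc by simp
qed

lemma degree_herm: "degree (herm n) = n" and lead_herm: "lead_coeff (herm n) = 2^n"
proof -
  have "degree (herm n) \<le> n" "coeff (herm n) n = 2^n" using herm_deg_aux by blast+
  moreover have "n \<le> degree (herm n)" using \<open>coeff (herm n) n = 2^n\<close> by (intro le_degree) simp
  ultimately show "degree (herm n) = n" "lead_coeff (herm n) = 2^n" by auto
qed


lemma poly_factor:
  fixes p :: "real poly"
  assumes "finite I" "inj_on z I" "\<forall>i\<in>I. poly p (z i) = 0" "degree p = card I"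
  shows "p = smult (lead_coeff p) (\<Prod>i\<in>I. [:-z i, 1:])"
  using assms
proof (induction I arbitrary: p rule: finite_induct)
  case empty
  then have "degree p = 0" by simp
  then have "p = [:coeff p 0:]" by (metis degree_0_id)
  moreover have "lead_coeff p = coeff p 0" using \<open>degree p = 0\<close> by simp
  moreover have "smult (coeff p 0) (1::real poly) = [:coeff p 0:]" by (simp add: one_pCons)
  ultimately show ?case by simp
next
  case (insert i I)
  have inj: "inj_on z (insert i I)" and roots: "\<forall>j\<in>insert i I. poly p (z j) = 0"
    and deg: "degree p = card (insert i I)" using insert.prems by auto
  have cI: "card (insert i I) = Suc (card I)" using insert.hyps by simp
  have "poly p (z i) = 0" using roots by auto
  then obtain q where q: "p = [:-z i, 1:] * q" using poly_eq_0_iff_dvd by (metis dvdE)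
  have "p \<noteq> 0" using deg cI by auto
  then have "q \<noteq> 0" using q by auto
  have "degree p = degree [:-z i, 1:] + degree q"
    unfolding q by (rule degree_mult_eq) (use \<open>q \<noteq> 0\<close> in auto)
  then have dq: "degree q = card I"
    using deg cI by simp
  have "\<forall>j\<in>I. poly q (z j) = 0"
  proof
    fix j assume j: "j \<in> I"
    then have "z j \<noteq> z i" using inj insert.hyps unfolding inj_on_def by (metis insertCI)
    moreover have "poly p (z j) = 0" using roots j by auto
    ultimately show "poly q (z j) = 0" using q by simp
  qed
  moreover have "inj_on z I" using inj by (meson inj_on_insert)
  ultimately have qf: "q = smult (lead_coeff q) (\<Prod>i\<in>I. [:-z i, 1:])"
    using insert.IH dq by blast
  have lc: "lead_coeff p = lead_coeff q" unfolding q by (simp only: lead_coeff_mult) simp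
  have pr: "[:-z i, 1:] * (\<Prod>i\<in>I. [:-z i, 1:]) = (\<Prod>i\<in>insert i I. [:-z i, 1:])"
    using insert.hyps by simp
  have "p = [:-z i, 1:] * smult (lead_coeff q) (\<Prod>i\<in>I. [:-z i, 1:])"
    using q qf by metis
  also have "\<dots> = smult (lead_coeff q) ([:-z i, 1:] * (\<Prod>i\<in>I. [:-z i, 1:]))" by (simp only: mult_smult_right)
  finally show ?case unfolding pr lc .
qed

lemma herm_factor:
  assumes "finite I" "inj_on z I" "\<forall>i\<in>I. poly (herm n) (z i) = 0" "card I = n"
  shows "herm n = smult (2^n) (\<Prod>i\<in>I. [:-z i, 1:])"
  using poly_factor[OF assms(1-3)] assms(4) herm_deg_aux[of n] by (simp add: degree_herm)

lemma sign_lemma: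
  fixes x :: "nat \<Rightarrow> real"
  assumes sm: "strict_mono_on {1..n} x" and k: "k \<in> {1..Suc n}"
    and lo: "2 \<le> k \<Longrightarrow> x (k-1) < y" and hi: "k \<le> n \<Longrightarrow> y < x k"
  shows "(-1)^(Suc n - k) * (\<Prod>j\<in>{1..n}. (y - x j)) > 0"
proof -
  have split: "{1..n} = {1..<k} \<union> {k..n}" using k by auto
  have P: "(\<Prod>j\<in>{1..n}. (y - x j)) = (\<Prod>j\<in>{1..<k}. (y - x j)) * (\<Prod>j\<in>{k..n}. (y - x j))"
    unfolding split by (rule prod.union_disjoint) auto
  have A: "(\<Prod>j\<in>{1..<k}. (y - x j)) > 0"
  proof (rule prod_pos)
    fix j assume j: "j \<in> {1..<k}"
    then have "x j \<le> x (k-1)" using k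
      by (intro strict_mono_on_leD[OF sm]) auto
    then show "y - x j > 0" using lo j by auto
  qed
  have B: "(\<Prod>j\<in>{k..n}. (y - x j)) = (-1)^(Suc n - k) * (\<Prod>j\<in>{k..n}. (x j - y))"
  proof -
    have "(\<Prod>j\<in>{k..n}. (y - x j)) = (\<Prod>j\<in>{k..n}. (-1) * (x j - y))" by simp
    also have "\<dots> = (-1)^card {k..n} * (\<Prod>j\<in>{k..n}. (x j - y))" by (simp only: prod.distrib prod_constant)
    also have "card {k..n} = Suc n - k" by simp
    finally show ?thesis .
  qed
  have C: "(\<Prod>j\<in>{k..n}. (x j - y)) > 0"
  proof (rule prod_pos)
    fix j assume j: "j \<in> {k..n}"
    then have "x k \<le> x j" using k
      by (intro strict_mono_on_leD[OF sm]) auto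
    then show "x j - y > 0" using hi j by auto
  qed
  have ss: "(-1::real)^(Suc n - k) * (-1)^(Suc n - k) = 1"
    by (simp only: power_mult_distrib[symmetric]) simp
  have G: "\<And>s a c::real. s * s = 1 \<Longrightarrow> s * (a * (s * c)) = a * c"
  proof -
    fix s a c :: real assume h: "s * s = 1"
    have "s * (a * (s * c)) = (s * s) * (a * c)" by (simp only: ac_simps)
    then show "s * (a * (s * c)) = a * c" using h by simp
  qed
  have "(-1)^(Suc n - k) * (\<Prod>j\<in>{1..n}. (y - x j)) = (\<Prod>j\<in>{1..<k}. (y - x j)) * (\<Prod>j\<in>{k..n}. (x j - y))"
    unfolding P B by (rule G[OF ss])
  then show ?thesis using A C by simp
qed


lemma herm_eval_factor:
  assumes "strict_mono_on {1..n} x" "\<forall>k\<in>{1..n}. poly (herm n) (x k) = 0"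
  shows "poly (herm n) y = 2^n * (\<Prod>j\<in>{1..n}. (y - x j))"
proof -
  have "inj_on x {1..n}" using assms(1) strict_mono_on_imp_inj_on by blast
  then have "herm n = smult (2^n) (\<Prod>i\<in>{1..n}. [:-x i, 1:])"
    using assms by (intro herm_factor) auto
  then show ?thesis by (simp add: poly_prod)
qed

lemma neg1_pow_sq: "(-1::real)^e * (-1)^e = 1"
  by (simp only: power_mult_distrib[symmetric]) simp

lemma herm_roots:
  assumes "1 \<le> n"
  shows "\<exists>x. strict_mono_on {1..n} x \<and> (\<forall>k\<in>{1..n}. poly (herm n) (x k) = 0)
          \<and> (\<forall>k\<in>{1..n}. (-1)^(n-k) * poly (herm (n-1)) (x k) > 0)"
  using assms
proof (induction n rule: nat_induct_at_least)
  case base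
  show ?case
    by (rule exI[of _ "\<lambda>_. 0"]) (auto simp: strict_mono_on_def)
next
  case (Suc n)
  then obtain x where sm: "strict_mono_on {1..n} x" and rx: "\<forall>k\<in>{1..n}. poly (herm n) (x k) = 0"
    and sx: "\<forall>k\<in>{1..n}. (-1)^(n-k) * poly (herm (n-1)) (x k) > 0" by blast
  define H where "H = herm (Suc n)"
  obtain m where nm: "n = Suc m" using Suc by (cases n) auto
  have Hx: "poly H (x k) = - 2 * real n * poly (herm (n-1)) (x k)" if "k \<in> {1..n}" for k
    using rx that by (simp add: H_def nm herm_rec algebra_simps)
  have hx: "(-1)^(Suc n - k) * poly H (x k) > 0" if k: "k \<in> {1..n}" for k
  proof -
    have "Suc n - k = Suc (n - k)" using k by auto
    then have "(-1)^(Suc n - k) * poly H (x k) = 2 * real n * ((-1)^(n-k) * poly (herm (n-1)) (x k))"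
      using Hx[OF k] by simp
    then show ?thesis using sx k Suc by simp
  qed
  have fac: "poly (herm n) y = 2^n * (\<Prod>j\<in>{1..n}. (y - x j))" for y
    using herm_eval_factor[OF sm rx] .
  have mid: "\<forall>k\<in>{2..n}. \<exists>r. x (k-1) < r \<and> r < x k \<and> poly H r = 0"
  proof
    fix k assume k: "k \<in> {2..n}"
    define e where "e = Suc n - k"
    have e1: "Suc n - (k-1) = Suc e" using k by (auto simp: e_def)
    have k1: "k-1 \<in> {1..n}" using k by auto
    have a1: "(-1)^(Suc e) * poly H (x (k-1)) > 0" using hx[OF k1] e1 by simp
    have kk: "k \<in> {1..n}" using k by auto
    have a2: "(-1)^e * poly H (x k) > 0" using hx[OF kk] unfolding e_def .
    have a1': "(-1)^e * poly H (x (k-1)) < 0" using a1 by simp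
    have pp: "((-1)^e * poly H (x (k-1))) * ((-1)^e * poly H (x k)) < 0" using a1' a2 by (rule mult_neg_pos)
    have eq: "((-1)^e * poly H (x (k-1))) * ((-1)^e * poly H (x k)) = ((-1::real)^e * (-1)^e) * (poly H (x (k-1)) * poly H (x k))"
      by (simp only: ac_simps)
    have "((-1::real)^e * (-1)^e) * (poly H (x (k-1)) * poly H (x k)) < 0" using pp unfolding eq .
    then have "poly H (x (k-1)) * poly H (x k) < 0" by (simp only: neg1_pow_sq mult_1)
    moreover have "x (k-1) < x k" using k by (intro strict_mono_onD[OF sm]) auto
    ultimately show "\<exists>r. x (k-1) < r \<and> r < x k \<and> poly H r = 0" using poly_IVT by blast
  qed
  then have "\<exists>f. \<forall>k\<in>{2..n}. x (k-1) < f k \<and> f k < x k \<and> poly H (f k) = 0"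
    by (rule bchoice)
  then obtain f where f: "\<forall>k\<in>{2..n}. x (k-1) < f k \<and> f k < x k \<and> poly H (f k) = 0"
    by blast
  obtain M where M: "\<forall>y\<ge>M. poly H y \<ge> lead_coeff H"
    using poly_pinfty_gt_lc[of H] by (auto simp: H_def lead_herm)
  have lcH: "lead_coeff H > 0" by (simp add: H_def lead_herm)
  have "\<exists>b. x n < b \<and> poly H b = 0"
  proof -
    define X where "X = max M (x n + 1)"
    have "X \<ge> M" by (simp add: X_def)
    then have "poly H X \<ge> lead_coeff H" using M by blast
    then have "poly H X > 0" using lcH by linarith
    moreover have "n \<in> {1..n}" using Suc by simp
    then have "(-1)^(Suc n - n) * poly H (x n) > 0" by (rule hx)
    then have "poly H (x n) < 0" by simp
    moreover have "x n < X" by (simp add: X_def)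
    ultimately show ?thesis using poly_IVT_pos by blast
  qed
  then obtain b where b: "x n < b" "poly H b = 0" by blast
  have "\<exists>a. a < x 1 \<and> poly H a = 0"
  proof -
    define X where "X = max M (1 - x 1)"
    have "X \<ge> M" by (simp add: X_def)
    then have "poly H X \<ge> lead_coeff H" using M by blast
    then have HX: "poly H X > 0" using lcH by linarith
    have "poly H (-X) = (-1)^(Suc n) * poly H X" by (simp add: H_def herm_parity)
    have "1 \<in> {1..n}" using Suc by simp
    then have "(-1)^(Suc n - 1) * poly H (x 1) > 0" by (rule hx)
    then have h1: "(-1)^n * poly H (x 1) > 0" by simp
    have m1: "(-1::real)^n * (-1)^(Suc n) = -1" using neg1_pow_sq[of n] by simp
    have "(-1)^n * poly H (-X) = ((-1::real)^n * (-1)^(Suc n)) * poly H X"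
      using \<open>poly H (-X) = _\<close> by (simp only: mult.assoc)
    then have h2: "(-1)^n * poly H (-X) < 0" using HX unfolding m1 by simp
    have pp: "((-1)^n * poly H (-X)) * ((-1)^n * poly H (x 1)) < 0" using h2 h1 by (rule mult_neg_pos)
    have eq: "((-1)^n * poly H (-X)) * ((-1)^n * poly H (x 1)) = ((-1::real)^n * (-1)^n) * (poly H (-X) * poly H (x 1))"
      by (simp only: ac_simps)
    have "(((-1::real)^n * (-1)^n) * (poly H (-X) * poly H (x 1))) < 0" using pp unfolding eq .
    then have "poly H (-X) * poly H (x 1) < 0" by (simp only: neg1_pow_sq mult_1)
    moreover have "-X < x 1" by (simp add: X_def)
    ultimately show ?thesis using poly_IVT by blast
  qed
  then obtain a where a: "a < x 1" "poly H a = 0" by blast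
  define y where "y k = (if k = 1 then a else if k = Suc n then b else f k)" for k
  have yprop: "(2 \<le> k \<longrightarrow> x (k-1) < y k) \<and> (k \<le> n \<longrightarrow> y k < x k) \<and> poly H (y k) = 0"
    if k: "k \<in> {1..Suc n}" for k
  proof (cases "k = 1")
    case True then show ?thesis using a Suc by (simp add: y_def)
  next
    case False
    show ?thesis
    proof (cases "k = Suc n")
      case True then show ?thesis using b False by (simp add: y_def)
    next
      case False2: False
      then have "k \<in> {2..n}" using k \<open>k \<noteq> 1\<close> by auto
      then show ?thesis using f False False2 by (auto simp: y_def)
    qed
  qed
  have smy: "strict_mono_on {1..Suc n} y"
  proof (rule strict_mono_onI)
    fix k l assume k: "k \<in> {1..Suc n}" and l: "l \<in> {1..Suc n}" and kl: "k < l"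
    have "y k < x k" using yprop[OF k] kl l by auto
    also have "x k \<le> x (l-1)" using k l kl by (intro strict_mono_on_leD[OF sm]) auto
    also have "x (l-1) < y l" using yprop[OF l] kl k by auto
    finally show "y k < y l" .
  qed
  have sy: "(-1)^(Suc n - k) * poly (herm n) (y k) > 0" if k: "k \<in> {1..Suc n}" for k
  proof -
    have "(-1)^(Suc n - k) * (\<Prod>j\<in>{1..n}. (y k - x j)) > 0"
      using yprop[OF k] by (intro sign_lemma[OF sm k]) auto
    then have "2^n * ((-1)^(Suc n - k) * (\<Prod>j\<in>{1..n}. (y k - x j))) > (0::real)" by simp
    then show ?thesis by (simp add: fac algebra_simps)
  qed
  show ?case
    using smy sy yprop by (intro exI[of _ y]) (auto simp: H_def)
qed



lemma inj_ne:
  fixes u :: "nat \<Rightarrow> real"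
  assumes "inj_on u A" "a \<in> A" "b \<in> A - {a}"
  shows "u a - u b \<noteq> 0"
proof
  assume "u a - u b = 0"
  then have "u a = u b" by simp
  then have "a = b" using inj_onD[OF assms(1)] assms(2,3) by blast
  then show False using assms(3) by simp
qed

lemma d1_gen: "pderiv [:-c, 1:] = (1::real poly)" by (simp add: pderiv_pCons)
lemma dP_gen: "pderiv ([:-c, 1:] * Q) = [:-c, 1:] * pderiv Q + (Q::real poly)"
  by (simp only: pderiv_mult d1_gen mult_1_right)
lemma ddP_gen: "pderiv (pderiv ([:-c, 1:] * Q)) = [:-c, 1:] * pderiv (pderiv Q) + smult 2 (pderiv (Q::real poly))"
proof -
  have two: "smult (2::real) p = p + p" for p :: "real poly"
    by (metis one_add_one smult_add_left smult_1_left)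
  show ?thesis unfolding dP_gen two by (simp only: dP_gen pderiv_add add.assoc)
qed

lemma crit:
  assumes N: "1 \<le> N" and inj: "inj_on u {1..N}" and r: "\<forall>i\<in>{1..N}. poly (herm N) (u i) = 0"
    and a: "a \<in> {1..N}"
  shows "(\<Sum>b\<in>{1..N}-{a}. 1 / (u a - u b)) = u a"
    and "2^N * (\<Prod>b\<in>{1..N}-{a}. (u a - u b)) = 2 * real N * poly (herm (N-1)) (u a)"
proof -
  define I where "I = {1..N}"
  define P where "P = (\<Prod>i\<in>I. [:-u i, 1:])"
  define Q where "Q = (\<Prod>i\<in>I-{a}. [:-u i, 1:])"
  have hP: "herm N = smult (2^N) P" unfolding P_def I_def
    using inj r by (intro herm_factor) auto
  have PQ: "P = [:-u a, 1:] * Q" unfolding P_def Q_def I_def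
    using a by (intro prod.remove) auto
  have dP: "pderiv P = [:-u a, 1:] * pderiv Q + Q"
    unfolding PQ by (rule dP_gen)
  have ddP: "pderiv (pderiv P) = [:-u a, 1:] * pderiv (pderiv Q) + smult 2 (pderiv Q)"
    unfolding PQ by (rule ddP_gen)
  have Qa: "poly Q (u a) = (\<Prod>b\<in>I-{a}. (u a - u b))"
    unfolding Q_def poly_prod by (rule prod.cong) simp_all
  have Qnz: "poly Q (u a) \<noteq> 0"
  proof -
    have "u a - u b \<noteq> 0" if "b \<in> I-{a}" for b
      using inj_ne[OF inj a] that unfolding I_def .
    then show ?thesis unfolding Qa by (simp add: prod_zero_iff I_def)
  qed
  have e1: "poly (pderiv (herm N)) (u a) = 2^N * poly Q (u a)"
    using hP dP by (simp add: pderiv_smult)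
  have e2: "poly (pderiv (pderiv (herm N))) (u a) = 2^N * (2 * poly (pderiv Q) (u a))"
    using hP ddP by (simp add: pderiv_smult)
  have ra: "poly (herm N) (u a) = 0" using r a by auto
  have "2^N * (2 * poly (pderiv Q) (u a)) = 2 * u a * (2^N * poly Q (u a))"
    using herm_ode[of N "u a"] e1 e2 ra by simp
  then have Q'a: "poly (pderiv Q) (u a) = u a * poly Q (u a)" by simp
  have "poly (pderiv Q) (u a) = (\<Sum>c\<in>I-{a}. poly (\<Prod>i\<in>(I-{a})-{c}. [:-u i, 1:]) (u a))"
    unfolding Q_def by (simp add: pderiv_prod poly_sum pderiv_pCons)
  also have "\<dots> = (\<Sum>c\<in>I-{a}. poly Q (u a) / (u a - u c))"
  proof (rule sum.cong)
    fix c assume c: "c \<in> I - {a}"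
    have c1: "c \<in> {1..N}" "c \<noteq> a" using c by (auto simp: I_def)
    have "u a \<noteq> u c" using inj_onD[OF inj _ a c1(1)] c1(2) by metis
    then have ne: "u a - u c \<noteq> 0" by simp
    have "poly Q (u a) = (u a - u c) * (\<Prod>b\<in>(I-{a})-{c}. (u a - u b))"
      unfolding Qa using c by (simp add: prod.remove I_def)
    then show "poly (\<Prod>i\<in>(I-{a})-{c}. [:-u i, 1:]) (u a) = poly Q (u a) / (u a - u c)"
      using ne by (simp add: poly_prod)
  qed simp
  also have "\<dots> = poly Q (u a) * (\<Sum>c\<in>I-{a}. 1 / (u a - u c))"
    unfolding sum_distrib_left by (rule sum.cong) simp_all
  finally have "poly Q (u a) * (\<Sum>c\<in>I-{a}. 1 / (u a - u c)) = poly Q (u a) * u a"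
    using Q'a by (simp only: mult.commute)
  then show "(\<Sum>b\<in>{1..N}-{a}. 1 / (u a - u b)) = u a"
    using Qnz unfolding I_def by simp
  obtain M where M: "N = Suc M" using N by (cases N) auto
  have "poly (pderiv (herm N)) (u a) = 2 * real N * poly (herm (N-1)) (u a)"
    unfolding M by (simp add: pderiv_herm)
  then show "2^N * (\<Prod>b\<in>{1..N}-{a}. (u a - u b)) = 2 * real N * poly (herm (N-1)) (u a)"
    using e1 Qa unfolding I_def by simp
qed

lemma sum_pairs_swap:
  assumes "finite I"
  shows "(\<Sum>a\<in>I. \<Sum>b\<in>I-{a}. f a b) = (\<Sum>a\<in>I. \<Sum>b\<in>I-{a}. f b a)"
proof -
  have e: "(\<Sum>b\<in>I-{a}. g b) = (\<Sum>b\<in>I. if b = a then 0 else g b)" if "a \<in> I" for a and g :: "'a \<Rightarrow> 'b"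
    using assms that by (simp add: sum.If_cases Diff_eq Int_commute)
  have "(\<Sum>a\<in>I. \<Sum>b\<in>I-{a}. f a b) = (\<Sum>a\<in>I. \<Sum>b\<in>I. if b = a then 0 else f a b)"
    by (rule sum.cong) (auto simp: e)
  also have "\<dots> = (\<Sum>b\<in>I. \<Sum>a\<in>I. if b = a then 0 else f a b)"
    by (rule sum.swap)
  also have "\<dots> = (\<Sum>a\<in>I. \<Sum>b\<in>I-{a}. f b a)"
    by (rule sum.cong) (auto simp: e eq_commute)
  finally show ?thesis .
qed

lemma hN_sq:
  "(hN N v)^2 = (\<Prod>a\<in>{1..N}. \<Prod>b\<in>{1..N}-{a}. \<bar>v a - v b\<bar>)"
proof (induction N)
  case 0
  then show ?case by (simp add: hN_def)
next
  case (Suc N)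
  define T where "T = (\<Prod>i\<in>{1..N}. (v (Suc N) - v i))"
  have h: "hN (Suc N) v = hN N v * T"
    unfolding hN_def T_def by (simp add: atLeastLessThanSuc_atLeastAtMost)
  have s1: "{1..Suc N} = insert (Suc N) {1..N}" by auto
  have s3: "{1..Suc N}-{Suc N} = {1..N}" by auto
  have s2: "{1..Suc N} - {a} = insert (Suc N) ({1..N} - {a})" if "a \<in> {1..N}" for a
    using that by auto
  have A1: "(\<Prod>a\<in>{1..Suc N}. \<Prod>b\<in>{1..Suc N}-{a}. \<bar>v a - v b\<bar>)
      = (\<Prod>b\<in>{1..Suc N}-{Suc N}. \<bar>v (Suc N) - v b\<bar>) * (\<Prod>a\<in>{1..N}. \<Prod>b\<in>{1..Suc N}-{a}. \<bar>v a - v b\<bar>)"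
    unfolding s1 by (simp add: s1[symmetric])
  have A2: "(\<Prod>a\<in>{1..N}. \<Prod>b\<in>{1..Suc N}-{a}. \<bar>v a - v b\<bar>)
      = (\<Prod>a\<in>{1..N}. \<bar>v a - v (Suc N)\<bar> * (\<Prod>b\<in>{1..N}-{a}. \<bar>v a - v b\<bar>))"
  proof (rule prod.cong)
    fix a assume a: "a \<in> {1..N}"
    have "Suc N \<notin> {1..N} - {a}" by auto
    then show "(\<Prod>b\<in>{1..Suc N}-{a}. \<bar>v a - v b\<bar>) = \<bar>v a - v (Suc N)\<bar> * (\<Prod>b\<in>{1..N}-{a}. \<bar>v a - v b\<bar>)"
      unfolding s2[OF a] by (simp add: prod.insert)
  qed simp
  have A3: "(\<Prod>a\<in>{1..N}. \<bar>v a - v (Suc N)\<bar> * (\<Prod>b\<in>{1..N}-{a}. \<bar>v a - v b\<bar>))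
      = (\<Prod>a\<in>{1..N}. \<bar>v a - v (Suc N)\<bar>) * (hN N v)^2"
    by (simp only: prod.distrib Suc)
  have B: "(\<Prod>b\<in>{1..Suc N}-{Suc N}. \<bar>v (Suc N) - v b\<bar>) = \<bar>T\<bar>"
    unfolding s3 T_def by (simp add: abs_prod)
  have C: "(\<Prod>a\<in>{1..N}. \<bar>v a - v (Suc N)\<bar>) = \<bar>T\<bar>"
    unfolding T_def by (simp add: abs_prod abs_minus_commute)
  have "(\<Prod>a\<in>{1..Suc N}. \<Prod>b\<in>{1..Suc N}-{a}. \<bar>v a - v b\<bar>) = \<bar>T\<bar> * (\<bar>T\<bar> * (hN N v)^2)"
    unfolding A1 A2 A3 B C ..
  also have "\<dots> = (hN N v * T)^2"
    by (simp add: power_mult_distrib abs_mult_self_eq mult.assoc[symmetric] power2_eq_square)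
  finally show ?case unfolding h by simp
qed



lemma herm_eval_gen:
  assumes "finite I" "inj_on z I" "\<forall>i\<in>I. poly (herm n) (z i) = 0" "card I = n"
  shows "poly (herm n) x = 2^n * (\<Prod>i\<in>I. (x - z i))"
proof -
  have "herm n = smult (2^n) (\<Prod>i\<in>I. [:-z i, 1:])" by (rule herm_factor[OF assms])
  then show ?thesis by (simp add: poly_prod)
qed

lemma herm_resultant:
  assumes "1 \<le> n"
  shows "inj_on u {1..n} \<Longrightarrow> \<forall>i\<in>{1..n}. poly (herm n) (u i) = 0 \<Longrightarrow>
    (\<Prod>a\<in>{1..n}. \<bar>poly (herm (n-1)) (u a)\<bar>) = (\<Prod>m\<in>{1..n-1}. (2*real m)^m)"
  using assms
proof (induction n arbitrary: u rule: nat_induct_at_least)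
  case base
  then show ?case by simp
next
  case (Suc n)
  obtain y where sm: "strict_mono_on {1..n} y" and ry: "\<forall>k\<in>{1..n}. poly (herm n) (y k) = 0"
    using herm_roots[OF Suc.hyps(1)] by blast
  have injy: "inj_on y {1..n}" using sm strict_mono_on_imp_inj_on by blast
  have fu: "poly (herm (Suc n)) x = 2^(Suc n) * (\<Prod>a\<in>{1..Suc n}. (x - u a))" for x
    using Suc.prems by (intro herm_eval_gen) auto
  have fy: "poly (herm n) x = 2^n * (\<Prod>k\<in>{1..n}. (x - y k))" for x
    using injy ry by (intro herm_eval_gen) auto
  have L: "(\<Prod>a\<in>{1..Suc n}. \<bar>poly (herm n) (u a)\<bar>) = (2^n)^(Suc n) * (\<Prod>a\<in>{1..Suc n}. \<Prod>k\<in>{1..n}. \<bar>u a - y k\<bar>)"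
    by (simp add: fy abs_mult abs_prod prod.distrib)
  have R: "(\<Prod>k\<in>{1..n}. \<bar>poly (herm (Suc n)) (y k)\<bar>) = (2^(Suc n))^n * (\<Prod>k\<in>{1..n}. \<Prod>a\<in>{1..Suc n}. \<bar>y k - u a\<bar>)"
    by (simp add: fu abs_mult abs_prod prod.distrib)
  have sw: "(\<Prod>a\<in>{1..Suc n}. \<Prod>k\<in>{1..n}. \<bar>u a - y k\<bar>) = (\<Prod>k\<in>{1..n}. \<Prod>a\<in>{1..Suc n}. \<bar>y k - u a\<bar>)"
    by (subst prod.swap) (simp add: abs_minus_commute)
  have pw: "((2::real)^n)^(Suc n) = (2^(Suc n))^n" by (simp flip: power_mult add: mult.commute)
  have LR: "(\<Prod>a\<in>{1..Suc n}. \<bar>poly (herm n) (u a)\<bar>) = (\<Prod>k\<in>{1..n}. \<bar>poly (herm (Suc n)) (y k)\<bar>)"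
    unfolding L R sw pw ..
  obtain m where nm: "n = Suc m" using Suc.hyps by (cases n) auto
  have hy: "\<bar>poly (herm (Suc n)) (y k)\<bar> = 2 * real n * \<bar>poly (herm (n-1)) (y k)\<bar>" if "k \<in> {1..n}" for k
  proof -
    have "poly (herm (Suc m)) (y k) = 0" using ry that nm by auto
    then have "poly (herm (Suc n)) (y k) = - (2 * real n * poly (herm (n-1)) (y k))"
      unfolding nm by (simp add: herm_rec algebra_simps)
    then show ?thesis by (simp add: abs_mult)
  qed
  have "(\<Prod>k\<in>{1..n}. \<bar>poly (herm (Suc n)) (y k)\<bar>) = (\<Prod>k\<in>{1..n}. 2 * real n * \<bar>poly (herm (n-1)) (y k)\<bar>)"
    by (rule prod.cong) (auto simp: hy)
  also have "\<dots> = (2 * real n)^n * (\<Prod>k\<in>{1..n}. \<bar>poly (herm (n-1)) (y k)\<bar>)"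
    by (simp add: prod.distrib)
  also have "(\<Prod>k\<in>{1..n}. \<bar>poly (herm (n-1)) (y k)\<bar>) = (\<Prod>m\<in>{1..n-1}. (2*real m)^m)"
    using Suc.IH[OF injy ry] .
  also have "(2 * real n)^n * (\<Prod>m\<in>{1..n-1}. (2*real m)^m) = (\<Prod>m\<in>{1..Suc n - 1}. (2*real m)^m)"
  proof -
    have "{1..Suc n - 1} = insert n {1..n-1}" using Suc.hyps by auto
    then show ?thesis using Suc.hyps by (simp add: prod.insert)
  qed
  finally show ?case using LR by simp
qed

lemma rank_perm:
  fixes N :: nat and v :: "nat \<Rightarrow> real"
  assumes inj: "inj_on v {1..N}"
  shows "\<exists>\<sigma>. \<sigma> permutes {1..N} \<and> (\<forall>a\<in>{1..N}. \<forall>b\<in>{1..N}. v a < v b \<longleftrightarrow> \<sigma> a < \<sigma> b)"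
proof -
  define I where "I = {1..(N::nat)}"
  define r where "r a = card {k\<in>I. v k \<le> v a}" for a
  have fin: "finite {k\<in>I. v k \<le> v a}" for a unfolding I_def by simp
  have mono: "r a < r b" if "a \<in> I" "b \<in> I" "v a < v b" for a b
  proof -
    have s: "{k\<in>I. v k \<le> v a} \<subseteq> {k\<in>I. v k \<le> v b}" using that by auto
    have "b \<in> {k\<in>I. v k \<le> v b}" "b \<notin> {k\<in>I. v k \<le> v a}" using that by auto
    then have "{k\<in>I. v k \<le> v a} \<subset> {k\<in>I. v k \<le> v b}" using s by blast
    then show ?thesis unfolding r_def by (rule psubset_card_mono[OF fin])
  qed
  have rI: "r a \<in> I" if "a \<in> I" for a
  proof -
    have "a \<in> {k\<in>I. v k \<le> v a}" using that by auto
    then have "card {k\<in>I. v k \<le> v a} \<ge> 1" using fin[of a] by (metis One_nat_def Suc_leI card_gt_0_iff empty_iff)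
    moreover have "card {k\<in>I. v k \<le> v a} \<le> card I" by (rule card_mono) (auto simp: I_def)
    ultimately show ?thesis unfolding r_def I_def by auto
  qed
  have iff: "v a < v b \<longleftrightarrow> r a < r b" if "a \<in> I" "b \<in> I" for a b
  proof
    assume "v a < v b" then show "r a < r b" using mono that by blast
  next
    assume rab: "r a < r b"
    show "v a < v b"
    proof (rule ccontr)
      assume "\<not> v a < v b"
      then consider "v b < v a" | "v a = v b" by linarith
      then show False
      proof cases
        case 1 then show False using mono[of b a] that rab by auto
      next
        case 2 then have "a = b" using inj_onD[OF inj] that unfolding I_def by metis
        then show False using rab by simp
      qed
    qed
  qed
  have injr: "inj_on r I"
  proof (rule inj_onI)
    fix a b assume a: "a \<in> I" and b: "b \<in> I" and e: "r a = r b"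
    have "\<not> v a < v b" "\<not> v b < v a" using iff[OF a b] iff[OF b a] e by auto
    then have "v a = v b" by linarith
    then show "a = b" using inj_onD[OF inj] a b unfolding I_def by metis
  qed
  have "r ` I = I" by (rule endo_inj_surj) (use rI injr in \<open>auto simp: I_def\<close>)
  then have bij: "bij_betw r I I" using injr by (simp add: bij_betw_def)
  define \<sigma> where "\<sigma> a = (if a \<in> I then r a else a)" for a
  have "bij_betw \<sigma> I I" using bij by (rule bij_betw_cong[THEN iffD1, rotated]) (simp add: \<sigma>_def)
  then have "\<sigma> permutes I" by (rule bij_imp_permutes) (simp add: \<sigma>_def)
  moreover have "\<forall>a\<in>I. \<forall>b\<in>I. v a < v b \<longleftrightarrow> \<sigma> a < \<sigma> b" using iff by (simp add: \<sigma>_def)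
  ultimately show ?thesis unfolding I_def by blast
qed

lemma gauss_sum: "(\<Sum>m\<in>{1..n}. real m) = real n * (real n + 1) / 2"
  by (induction n) (simp_all add: field_simps)

lemma ln_hN:
  assumes inj: "inj_on v {1..N}"
  shows "2 * ln \<bar>hN N v\<bar> = (\<Sum>a\<in>{1..N}. \<Sum>b\<in>{1..N}-{a}. ln \<bar>v a - v b\<bar>)"
proof -
  have nz: "\<bar>v a - v b\<bar> \<noteq> 0" if "a \<in> {1..N}" "b \<in> {1..N}-{a}" for a b
    using inj_ne[OF inj that] by simp
  have pnz: "(\<Prod>b\<in>{1..N}-{a}. \<bar>v a - v b\<bar>) \<noteq> 0" if "a \<in> {1..N}" for a
    using nz[OF that] by (simp add: prod_zero_iff)
  have "2 * ln \<bar>hN N v\<bar> = ln (\<bar>hN N v\<bar>^2)" by (subst ln_realpow) simp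
  also have "\<bar>hN N v\<bar>^2 = (\<Prod>a\<in>{1..N}. \<Prod>b\<in>{1..N}-{a}. \<bar>v a - v b\<bar>)"
    using hN_sq[of N v] by simp
  also have "ln \<dots> = (\<Sum>a\<in>{1..N}. ln (\<Prod>b\<in>{1..N}-{a}. \<bar>v a - v b\<bar>))"
    by (rule ln_prod[OF finite_atLeastAtMost pnz])
  also have "\<dots> = (\<Sum>a\<in>{1..N}. \<Sum>b\<in>{1..N}-{a}. ln \<bar>v a - v b\<bar>)"
  proof (rule sum.cong)
    fix a assume a: "a \<in> {1..N}"
    show "ln (\<Prod>b\<in>{1..N}-{a}. \<bar>v a - v b\<bar>) = (\<Sum>b\<in>{1..N}-{a}. ln \<bar>v a - v b\<bar>)"
      by (rule ln_prod) (use nz[OF a] in simp_all)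
  qed simp
  finally show ?thesis .
qed



lemma card_minus_pt: "a \<in> {1..N} \<Longrightarrow> card ({1..N} - {a}) = N - 1"
  by simp

lemma sum_pairs_const: "(\<Sum>a\<in>{1..N}. \<Sum>b\<in>{1..N}-{a}. (c::real)) = real N * (real N - 1) * c"
proof -
  have "(\<Sum>a\<in>{1..N}. \<Sum>b\<in>{1..N}-{a}. c) = (\<Sum>a\<in>{1..N}. real (N - 1) * c)"
    by (rule sum.cong) (auto simp: card_minus_pt)
  also have "\<dots> = real N * (real N - 1) * c"
    by (cases N) auto
  finally show ?thesis .
qed

lemma value_roots:
  fixes N :: nat and t :: real and u :: "nat \<Rightarrow> real"
  assumes N: "1 \<le> N" and t: "t > 0" and inj: "inj_on u {1..N}"
    and r: "\<forall>i\<in>{1..N}. poly (herm N) (u i) = 0"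
  shows "FN N (\<lambda>i. sqrt (2*t) * u i) t = 0"
    and "\<forall>a\<in>{1..N}. (\<Sum>b\<in>{1..N}-{a}. 1 / (sqrt (2*t) * u a - sqrt (2*t) * u b)) = sqrt (2*t) * u a / (2*t)"
    and "(\<Sum>a\<in>{1..N}. (sqrt (2*t) * u a)^2) = t * (real N * (real N - 1))"
proof -
  define I where "I = {1..N}"
  define s where "s = sqrt (2*t)"
  have s: "s > 0" using t by (simp add: s_def)
  have s2: "s^2 = 2*t" using t by (simp add: s_def)
  have cr: "(\<Sum>b\<in>I-{a}. 1 / (u a - u b)) = u a" if "a \<in> I" for a
    using that unfolding I_def by (rule crit(1)[OF N inj r])
  have ne: "u a - u b \<noteq> 0" if "a \<in> I" "b \<in> I - {a}" for a b
    using inj_ne[OF inj] that unfolding I_def by blast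
  define S1 where "S1 = (\<Sum>a\<in>I. \<Sum>b\<in>I-{a}. u a / (u a - u b))"
  have sq1: "(\<Sum>a\<in>I. (u a)^2) = S1"
    unfolding S1_def
  proof (rule sum.cong)
    fix a assume a: "a \<in> I"
    have "(u a)^2 = u a * (\<Sum>b\<in>I-{a}. 1 / (u a - u b))" using cr[OF a] by (simp add: power2_eq_square)
    then show "(u a)^2 = (\<Sum>b\<in>I-{a}. u a / (u a - u b))" by (simp add: sum_distrib_left)
  qed simp
  have S1sw: "S1 = (\<Sum>a\<in>I. \<Sum>b\<in>I-{a}. u b / (u b - u a))"
    unfolding S1_def I_def by (rule sum_pairs_swap) simp
  have "S1 + S1 = (\<Sum>a\<in>I. \<Sum>b\<in>I-{a}. (u a / (u a - u b) + u b / (u b - u a)))"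
    unfolding S1_def[symmetric] S1sw[symmetric] by (simp add: sum.distrib S1_def S1sw[symmetric])
  also have "\<dots> = (\<Sum>a\<in>I. \<Sum>b\<in>I-{a}. (1::real))"
  proof (intro sum.cong refl)
    fix a b assume a: "a \<in> I" and b: "b \<in> I - {a}"
    have d: "u b - u a = - (u a - u b)" by simp
    have "u a / (u a - u b) + u b / (u b - u a) = u a / (u a - u b) - u b / (u a - u b)"
      unfolding d divide_minus_right by simp
    also have "\<dots> = (u a - u b) / (u a - u b)" by (rule diff_divide_distrib[symmetric])
    also have "\<dots> = 1" using ne[OF a b] by simp
    finally show "u a / (u a - u b) + u b / (u b - u a) = 1" .
  qed
  also have "\<dots> = real N * (real N - 1)" unfolding I_def using sum_pairs_const[of N 1] by simp
  finally have sumsq: "(\<Sum>a\<in>I. (u a)^2) = real N * (real N - 1) / 2" using sq1 by simp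
  show sq: "(\<Sum>a\<in>{1..N}. (sqrt (2*t) * u a)^2) = t * (real N * (real N - 1))"
  proof -
    have "(\<Sum>a\<in>I. (s * u a)^2) = s^2 * (\<Sum>a\<in>I. (u a)^2)"
      by (simp add: power_mult_distrib sum_distrib_left)
    also have "\<dots> = 2 * t * (real N * (real N - 1) / 2)" unfolding s2 sumsq ..
    also have "\<dots> = t * (real N * (real N - 1))" by simp
    finally show ?thesis unfolding I_def s_def .
  qed
  show "\<forall>a\<in>{1..N}. (\<Sum>b\<in>{1..N}-{a}. 1 / (sqrt (2*t) * u a - sqrt (2*t) * u b)) = sqrt (2*t) * u a / (2*t)"
  proof
    fix a assume a: "a \<in> {1..N}"
    have "(\<Sum>b\<in>I-{a}. 1 / (s * u a - s * u b)) = (\<Sum>b\<in>I-{a}. (1/s) * (1 / (u a - u b)))"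
      by (rule sum.cong) (auto simp: right_diff_distrib[symmetric])
    also have "\<dots> = (1/s) * (\<Sum>b\<in>I-{a}. 1 / (u a - u b))" by (rule sum_distrib_left[symmetric])
    also have "(\<Sum>b\<in>I-{a}. 1 / (u a - u b)) = u a" using a unfolding I_def by (rule cr[unfolded I_def])
    also have "(1/s) * u a = s * u a / (2*t)"
    proof -
      have e: "2 * t = s * s" using s2 by (simp add: power2_eq_square)
      show ?thesis unfolding e using s by simp
    qed
    finally show "(\<Sum>b\<in>{1..N}-{a}. 1 / (sqrt (2*t) * u a - sqrt (2*t) * u b)) = sqrt (2*t) * u a / (2*t)"
      unfolding s_def I_def .
  qed
  define w where "w i = s * u i" for i
  have injw: "inj_on w {1..N}"
  proof (rule inj_onI)
    fix x y assume "x \<in> {1..N}" "y \<in> {1..N}" "w x = w y"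
    then have "u x = u y" using s by (simp add: w_def)
    then show "x = y" using inj_onD[OF inj] \<open>x \<in> {1..N}\<close> \<open>y \<in> {1..N}\<close> by blast
  qed
  define n where "n = real N"
  define S where "S = (\<Sum>m\<in>{1..N-1}. real m * ln (real m))"
  have prodne: "(\<Prod>b\<in>I-{a}. (u a - u b)) \<noteq> 0" if "a \<in> I" for a
    using ne that by (simp add: prod_zero_iff I_def)
  have cr2: "2^N * (\<Prod>b\<in>I-{a}. (u a - u b)) = 2 * n * poly (herm (N-1)) (u a)" if "a \<in> I" for a
    using that unfolding I_def n_def by (rule crit(2)[OF N inj r])
  have Hnz: "poly (herm (N-1)) (u a) \<noteq> 0" if "a \<in> I" for a
    using cr2[OF that] prodne[OF that] by auto
  have npos: "n > 0" using N by (simp add: n_def)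
  have inner: "(\<Sum>b\<in>I-{a}. ln \<bar>u a - u b\<bar>) = ln 2 + ln n + ln \<bar>poly (herm (N-1)) (u a)\<bar> - real N * ln 2"
    if a: "a \<in> I" for a
  proof -
    have "(\<Sum>b\<in>I-{a}. ln \<bar>u a - u b\<bar>) = ln (\<Prod>b\<in>I-{a}. \<bar>u a - u b\<bar>)"
      by (rule ln_prod[symmetric]) (use ne a in \<open>auto simp: I_def\<close>)
    also have "(\<Prod>b\<in>I-{a}. \<bar>u a - u b\<bar>) = \<bar>\<Prod>b\<in>I-{a}. (u a - u b)\<bar>" by (simp add: abs_prod)
    also have "\<bar>\<Prod>b\<in>I-{a}. (u a - u b)\<bar> = 2 * n * \<bar>poly (herm (N-1)) (u a)\<bar> / 2^N"
    proof -
      have "\<bar>2^N * (\<Prod>b\<in>I-{a}. (u a - u b))\<bar> = \<bar>2 * n * poly (herm (N-1)) (u a)\<bar>"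
        using cr2[OF a] by simp
      then have "2^N * \<bar>\<Prod>b\<in>I-{a}. (u a - u b)\<bar> = 2 * n * \<bar>poly (herm (N-1)) (u a)\<bar>"
        using npos by (simp add: abs_mult)
      then show ?thesis by (simp add: eq_divide_eq mult.commute)
    qed
    also have "ln (2 * n * \<bar>poly (herm (N-1)) (u a)\<bar> / 2^N) = ln 2 + ln n + ln \<bar>poly (herm (N-1)) (u a)\<bar> - real N * ln 2"
      using npos Hnz[OF a] by (simp add: ln_div ln_mult ln_realpow)
    finally show ?thesis .
  qed
  have res: "(\<Sum>a\<in>I. ln \<bar>poly (herm (N-1)) (u a)\<bar>) = ln 2 * ((n - 1) * n / 2) + S"
  proof -
    have "(\<Sum>a\<in>I. ln \<bar>poly (herm (N-1)) (u a)\<bar>) = ln (\<Prod>a\<in>I. \<bar>poly (herm (N-1)) (u a)\<bar>)"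
      by (rule ln_prod[symmetric]) (use Hnz in \<open>auto simp: I_def\<close>)
    also have "\<dots> = ln (\<Prod>m\<in>{1..N-1}. (2*real m)^m)"
      unfolding I_def using herm_resultant[OF N inj r] by simp
    also have "\<dots> = (\<Sum>m\<in>{1..N-1}. ln ((2*real m)^m))"
      by (rule ln_prod) auto
    also have "\<dots> = (\<Sum>m\<in>{1..N-1}. ln 2 * real m + real m * ln (real m))"
      by (rule sum.cong) (auto simp: ln_realpow ln_mult algebra_simps)
    also have "\<dots> = ln 2 * (\<Sum>m\<in>{1..N-1}. real m) + S"
      by (simp add: sum.distrib sum_distrib_left S_def)
    also have "(\<Sum>m\<in>{1..N-1}. real m) = (n - 1) * n / 2"
      using gauss_sum[of "N-1"] N by (simp add: n_def of_nat_diff algebra_simps)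
    finally show ?thesis .
  qed
  have lnh: "2 * ln \<bar>hN N w\<bar> = n * (n - 1) * (ln 2 + ln t) / 2 + (n * (ln 2 + ln n) - n * n * ln 2 + (ln 2 * ((n - 1) * n / 2) + S))"
  proof -
    have "2 * ln \<bar>hN N w\<bar> = (\<Sum>a\<in>I. \<Sum>b\<in>I-{a}. ln \<bar>w a - w b\<bar>)"
      using ln_hN[OF injw] unfolding I_def .
    also have "\<dots> = (\<Sum>a\<in>I. \<Sum>b\<in>I-{a}. ln s + ln \<bar>u a - u b\<bar>)"
    proof (intro sum.cong refl)
      fix a b assume a: "a \<in> I" and b: "b \<in> I - {a}"
      have "\<bar>w a - w b\<bar> = s * \<bar>u a - u b\<bar>" using s by (simp add: w_def right_diff_distrib[symmetric] abs_mult)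
      then show "ln \<bar>w a - w b\<bar> = ln s + ln \<bar>u a - u b\<bar>" using s ne[OF a b] by (simp add: ln_mult)
    qed
    also have "\<dots> = (\<Sum>a\<in>I. \<Sum>b\<in>I-{a}. ln s) + (\<Sum>a\<in>I. \<Sum>b\<in>I-{a}. ln \<bar>u a - u b\<bar>)"
      by (simp add: sum.distrib)
    also have "(\<Sum>a\<in>I. \<Sum>b\<in>I-{a}. ln s) = n * (n - 1) * ln s"
      unfolding I_def n_def by (rule sum_pairs_const)
    also have "(\<Sum>a\<in>I. \<Sum>b\<in>I-{a}. ln \<bar>u a - u b\<bar>) = (\<Sum>a\<in>I. ln 2 + ln n - real N * ln 2 + ln \<bar>poly (herm (N-1)) (u a)\<bar>)"
      by (rule sum.cong) (auto simp: inner)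
    also have "\<dots> = n * (ln 2 + ln n - n * ln 2) + (\<Sum>a\<in>I. ln \<bar>poly (herm (N-1)) (u a)\<bar>)"
      by (simp add: sum.distrib I_def n_def)
    also have "ln s = (ln 2 + ln t) / 2" using t by (simp add: s_def ln_sqrt ln_mult)
    finally show ?thesis unfolding res by (simp add: algebra_simps)
  qed
  have sj: "(\<Sum>j=1..N. real j * ln (real j)) = S + n * ln n"
  proof -
    have "{1..N} = insert N {1..N-1}" using N by auto
    then show ?thesis using N by (simp add: S_def n_def)
  qed
  have sqw: "(\<Sum>j=1..N. (w j)^2) / (2*t) = n * (n - 1) / 2"
    using sq t unfolding w_def s_def n_def by (simp add: field_simps)
  show "FN N (\<lambda>i. sqrt (2*t) * u i) t = 0"
  proof -
    have "(\<lambda>i. sqrt (2*t) * u i) = w" by (simp add: w_def s_def fun_eq_iff)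
    then have "FN N (\<lambda>i. sqrt (2*t) * u i) t = FN N w t" by simp
    also have "FN N w t = n / 2 * (n - 1) * (1 - ln t) - (S + n * ln n) + 2 * ln \<bar>hN N w\<bar> - n * (n - 1) / 2"
      unfolding FN_def sj sqw by (simp only: n_def)
    also have "\<dots> = 0" unfolding lnh by (simp add: field_simps)
    finally show ?thesis .
  qed
qed



lemma pair_ineq:
  fixes p q :: real
  assumes "p \<noteq> 0" "q \<noteq> 0" "p < 0 \<longleftrightarrow> q < 0"
  shows "ln \<bar>p\<bar> \<le> ln \<bar>q\<bar> + p / q - 1"
proof -
  have qpos: "p / q > 0" using assms by (auto simp: zero_less_divide_iff)
  have "\<bar>p\<bar> = (p / q) * \<bar>q\<bar>"
  proof -
    have "\<bar>p\<bar> = \<bar>p / q\<bar> * \<bar>q\<bar>" using assms by (simp add: abs_divide)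
    also have "\<bar>p / q\<bar> = p / q" using qpos by (rule abs_of_pos)
    finally show ?thesis .
  qed
  then have "ln \<bar>p\<bar> = ln ((p / q) * \<bar>q\<bar>)" by (rule arg_cong)
  also have "\<dots> = ln (p / q) + ln \<bar>q\<bar>" using qpos assms(2) by (intro ln_mult_pos) auto
  finally have "ln \<bar>p\<bar> = ln (p / q) + ln \<bar>q\<bar>" .
  moreover have "ln (p / q) \<le> p / q - 1" using qpos by (rule ln_le_minus_one)
  ultimately show ?thesis by linarith
qed

lemma tangent:
  fixes v w :: "nat \<Rightarrow> real" and N :: nat and t :: real
  assumes t: "t > 0" and N: "1 \<le> N"
    and injv: "inj_on v {1..N}" and injw: "inj_on w {1..N}"
    and ord: "\<forall>a\<in>{1..N}. \<forall>b\<in>{1..N}. v a < v b \<longleftrightarrow> w a < w b"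
    and crit: "\<forall>a\<in>{1..N}. (\<Sum>b\<in>{1..N}-{a}. 1 / (w a - w b)) = w a / (2*t)"
    and sq: "(\<Sum>a\<in>{1..N}. (w a)^2) = t * (real N * (real N - 1))"
  shows "FN N v t \<le> FN N w t"
proof -
  define I where "I = {1..N}"
  define n where "n = real N"
  define A where "A = (\<Sum>a\<in>I. v a * w a)"
  define V where "V = (\<Sum>a\<in>I. (v a)^2)"
  define W where "W = (\<Sum>a\<in>I. (w a)^2)"
  have pw: "ln \<bar>v a - v b\<bar> \<le> ln \<bar>w a - w b\<bar> + (v a - v b) / (w a - w b) - 1"
    if a: "a \<in> I" and b: "b \<in> I - {a}" for a b
  proof (rule pair_ineq)
    show "v a - v b \<noteq> 0" using inj_ne[OF injv] a b unfolding I_def by blast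
    show "w a - w b \<noteq> 0" using inj_ne[OF injw] a b unfolding I_def by blast
    have "v a < v b \<longleftrightarrow> w a < w b" using ord a b unfolding I_def by blast
    then show "v a - v b < 0 \<longleftrightarrow> w a - w b < 0" by simp
  qed
  have sum1: "(\<Sum>a\<in>I. \<Sum>b\<in>I-{a}. ln \<bar>v a - v b\<bar>) \<le> (\<Sum>a\<in>I. \<Sum>b\<in>I-{a}. ln \<bar>w a - w b\<bar> + (v a - v b) / (w a - w b) - 1)"
    by (intro sum_mono) (use pw in auto)
  have split: "(\<Sum>a\<in>I. \<Sum>b\<in>I-{a}. ln \<bar>w a - w b\<bar> + (v a - v b) / (w a - w b) - 1)
      = (\<Sum>a\<in>I. \<Sum>b\<in>I-{a}. ln \<bar>w a - w b\<bar>) + (\<Sum>a\<in>I. \<Sum>b\<in>I-{a}. v a / (w a - w b))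
        + (\<Sum>a\<in>I. \<Sum>b\<in>I-{a}. v b / (w b - w a)) - (\<Sum>a\<in>I. \<Sum>b\<in>I-{a}. (1::real))"
  proof -
    have "(\<Sum>a\<in>I. \<Sum>b\<in>I-{a}. ln \<bar>w a - w b\<bar> + (v a - v b) / (w a - w b) - 1)
      = (\<Sum>a\<in>I. \<Sum>b\<in>I-{a}. ln \<bar>w a - w b\<bar> + v a / (w a - w b) + v b / (w b - w a) - 1)"
    proof (intro sum.cong refl)
      fix a b
      have d: "w b - w a = - (w a - w b)" by simp
      have "(v a - v b) / (w a - w b) = v a / (w a - w b) + v b / (w b - w a)"
        unfolding d divide_minus_right by (simp add: diff_divide_distrib)
      then show "ln \<bar>w a - w b\<bar> + (v a - v b) / (w a - w b) - 1 = ln \<bar>w a - w b\<bar> + v a / (w a - w b) + v b / (w b - w a) - 1"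
        by simp
    qed
    then show ?thesis by (simp add: sum.distrib sum_subtractf)
  qed
  have swp: "(\<Sum>a\<in>I. \<Sum>b\<in>I-{a}. v b / (w b - w a)) = (\<Sum>a\<in>I. \<Sum>b\<in>I-{a}. v a / (w a - w b))"
    using sum_pairs_swap[of I "\<lambda>a b. v a / (w a - w b)"] unfolding I_def by simp
  have cA: "(\<Sum>a\<in>I. \<Sum>b\<in>I-{a}. v a / (w a - w b)) = A / (2*t)"
  proof -
    have "(\<Sum>a\<in>I. \<Sum>b\<in>I-{a}. v a / (w a - w b)) = (\<Sum>a\<in>I. v a * (\<Sum>b\<in>I-{a}. 1 / (w a - w b)))"
      by (simp add: sum_distrib_left)
    also have "\<dots> = (\<Sum>a\<in>I. v a * (w a / (2*t)))"
      by (rule sum.cong) (use crit in \<open>auto simp: I_def\<close>)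
    also have "\<dots> = A / (2*t)" by (simp add: A_def sum_divide_distrib)
    finally show ?thesis .
  qed
  have c1: "(\<Sum>a\<in>I. \<Sum>b\<in>I-{a}. (1::real)) = n * (n - 1)"
    unfolding I_def n_def using sum_pairs_const[of N 1] by simp
  have lv: "2 * ln \<bar>hN N v\<bar> \<le> 2 * ln \<bar>hN N w\<bar> + A / t - n * (n - 1)"
  proof -
    have "2 * ln \<bar>hN N v\<bar> = (\<Sum>a\<in>I. \<Sum>b\<in>I-{a}. ln \<bar>v a - v b\<bar>)" unfolding I_def by (rule ln_hN[OF injv])
    also have "\<dots> \<le> (\<Sum>a\<in>I. \<Sum>b\<in>I-{a}. ln \<bar>w a - w b\<bar>) + A / (2*t) + A / (2*t) - n * (n - 1)"
      using sum1 unfolding split swp cA c1 .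
    also have "(\<Sum>a\<in>I. \<Sum>b\<in>I-{a}. ln \<bar>w a - w b\<bar>) = 2 * ln \<bar>hN N w\<bar>" unfolding I_def by (rule ln_hN[OF injw, symmetric])
    finally have "2 * ln \<bar>hN N v\<bar> \<le> 2 * ln \<bar>hN N w\<bar> + A / (2*t) + A / (2*t) - n * (n - 1)" .
    moreover have "A / (2*t) + A / (2*t) = A / t" using t by (simp add: field_simps)
    ultimately show ?thesis by linarith
  qed
  have quad: "V \<ge> 2 * A - W"
  proof -
    have "(\<Sum>a\<in>I. 2 * (v a * w a) - (w a)^2) \<le> (\<Sum>a\<in>I. (v a)^2)"
    proof (rule sum_mono)
      fix a
      have "0 \<le> (v a - w a)^2" by simp
      then show "2 * (v a * w a) - (w a)^2 \<le> (v a)^2" by (simp add: power2_diff)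
    qed
    then show ?thesis by (simp add: V_def A_def W_def sum_subtractf sum_distrib_left)
  qed
  have Wv: "W = t * (n * (n - 1))" using sq unfolding W_def I_def n_def .
  have q2: "V / (2*t) \<ge> (2 * A - W) / (2*t)" using quad t by (simp add: divide_right_mono)
  have e1: "A / t - (2 * A - W) / (2*t) = W / (2*t)" using t by (simp add: field_simps)
  have e2: "W / (2*t) + W / (2*t) = n * (n - 1)" using t unfolding Wv by (simp add: field_simps)
  have "FN N v t = real N / 2 * (real N - 1) * (1 - ln t) - (\<Sum>j=1..N. real j * ln (real j)) + 2 * ln \<bar>hN N v\<bar> - V / (2*t)"
    unfolding FN_def V_def I_def ..
  moreover have "FN N w t = real N / 2 * (real N - 1) * (1 - ln t) - (\<Sum>j=1..N. real j * ln (real j)) + 2 * ln \<bar>hN N w\<bar> - W / (2*t)"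
    unfolding FN_def W_def I_def ..
  ultimately show ?thesis using lv q2 e1 e2 by linarith
qed

lemma herm_Suc_eval: "poly (herm (Suc n)) x = 2 * x * poly (herm n) x - poly (pderiv (herm n)) x"
proof (cases n)
  case 0 then show ?thesis by simp
next
  case (Suc m) then show ?thesis by (simp add: herm_rec pderiv_herm)
qed

lemma deriv_gauss:
  "(deriv ^^ n) (\<lambda>y. exp (- y\<^sup>2)) = (\<lambda>x. (-1)^n * (poly (herm n) x * exp (- x\<^sup>2)))"
proof (induction n)
  case 0
  show ?case by simp
next
  case (Suc n)
  have "deriv (\<lambda>x. (-1)^n * (poly (herm n) x * exp (- x\<^sup>2))) x = (-1)^(Suc n) * (poly (herm (Suc n)) x * exp (- x\<^sup>2))" for x :: real
  proof -
    have d1: "(poly (herm n) has_real_derivative poly (pderiv (herm n)) x) (at x)" by (rule poly_DERIV)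
    have d2: "((\<lambda>x. exp (- x\<^sup>2)) has_real_derivative exp (- x\<^sup>2) * (- (2 * x))) (at x)"
      by (auto intro!: derivative_eq_intros)
    have d3: "((\<lambda>x. (-1)^n * (poly (herm n) x * exp (- x\<^sup>2))) has_real_derivative
        (-1)^n * (poly (herm n) x * (exp (- x\<^sup>2) * (- (2 * x))) + poly (pderiv (herm n)) x * exp (- x\<^sup>2))) (at x)"
      by (rule DERIV_cmult[OF DERIV_mult'[OF d1 d2]])
    have "(-1)^n * (poly (herm n) x * (exp (- x\<^sup>2) * (- (2 * x))) + poly (pderiv (herm n)) x * exp (- x\<^sup>2))
        = (-1)^(Suc n) * (poly (herm (Suc n)) x * exp (- x\<^sup>2))"
      by (simp add: herm_Suc_eval algebra_simps)
    then show ?thesis using DERIV_imp_deriv[OF d3] by simp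
  qed
  then have D: "deriv (\<lambda>x. (-1)^n * (poly (herm n) x * exp (- x\<^sup>2))) = (\<lambda>x. (-1)^(Suc n) * (poly (herm (Suc n)) x * exp (- x\<^sup>2)))"
    by (rule ext)
  have "(deriv ^^ Suc n) (\<lambda>y. exp (- y\<^sup>2)) = deriv ((deriv ^^ n) (\<lambda>y. exp (- y\<^sup>2)))" by simp
  also have "\<dots> = deriv (\<lambda>x. (-1)^n * (poly (herm n) x * exp (- x\<^sup>2)))" by (simp only: Suc.IH)
  finally show ?case by (simp only: D)
qed

lemma hermite_herm: "hermite N x = poly (herm N) x"
proof -
  have "hermite N x = ((-1)^N * (-1)^N) * (exp (x\<^sup>2) * exp (- x\<^sup>2)) * poly (herm N) x"
    unfolding hermite_def deriv_gauss by (simp add: ac_simps)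
  also have "exp (x\<^sup>2) * exp (- x\<^sup>2) = 1" by (simp flip: exp_add)
  also have "(-1::real)^N * (-1)^N = 1" by (rule neg1_pow_sq)
  finally show ?thesis by simp
qed

theorem lemma2:
  fixes N :: nat and t :: real
  assumes "N \<ge> 2" and "t > 0"
  shows "(\<forall>v. inj_on v {1..N} \<longrightarrow> FN N v t \<le> 0)
       \<and> (\<exists>v. inj_on v {1..N} \<and> FN N v t = 0)
       \<and> (\<forall>z \<rho>. strict_mono_on {1..N} z \<and> (\<forall>i\<in>{1..N}. hermite N (z i) = 0)
             \<and> \<rho> permutes {1..N}
             \<longrightarrow> FN N (\<lambda>i. sqrt (2 * t) * z (\<rho> i)) t = 0)"
proof -
  have N: "1 \<le> N" using assms(1) by simp
  have t: "t > 0" by (rule assms(2))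
  have sp: "sqrt (2 * t) > 0" using t by simp
  have permroots: "inj_on (\<lambda>i. x (\<rho> i)) {1..N} \<and> (\<forall>i\<in>{1..N}. poly (herm N) (x (\<rho> i)) = 0)"
    if sm: "strict_mono_on {1..N} x" and rx: "\<forall>i\<in>{1..N}. poly (herm N) (x i) = 0"
      and p: "\<rho> permutes {1..N}" for x \<rho>
  proof
    have ix: "inj_on x {1..N}" using sm strict_mono_on_imp_inj_on by blast
    have ir: "inj_on \<rho> {1..N}" using p by (rule permutes_inj_on)
    have im: "\<rho> ` {1..N} = {1..N}" using p by (rule permutes_image)
    show "inj_on (\<lambda>i. x (\<rho> i)) {1..N}"
      using comp_inj_on[OF ir, of x] ix im by (simp add: o_def)
    show "\<forall>i\<in>{1..N}. poly (herm N) (x (\<rho> i)) = 0"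
      using rx im by auto
  qed
  have P3: "\<forall>z \<rho>. strict_mono_on {1..N} z \<and> (\<forall>i\<in>{1..N}. hermite N (z i) = 0)
             \<and> \<rho> permutes {1..N}
             \<longrightarrow> FN N (\<lambda>i. sqrt (2 * t) * z (\<rho> i)) t = 0"
  proof (intro allI impI)
    fix z \<rho> assume h: "strict_mono_on {1..N} z \<and> (\<forall>i\<in>{1..N}. hermite N (z i) = 0) \<and> \<rho> permutes {1..N}"
    then have "\<forall>i\<in>{1..N}. poly (herm N) (z i) = 0" by (simp add: hermite_herm)
    then have pr: "inj_on (\<lambda>i. z (\<rho> i)) {1..N} \<and> (\<forall>i\<in>{1..N}. poly (herm N) (z (\<rho> i)) = 0)"
      using permroots h by blast
    show "FN N (\<lambda>i. sqrt (2 * t) * z (\<rho> i)) t = 0"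
      using value_roots(1)[OF N t, of "\<lambda>i. z (\<rho> i)"] pr by simp
  qed
  obtain x where smx: "strict_mono_on {1..N} x" and rx: "\<forall>k\<in>{1..N}. poly (herm N) (x k) = 0"
    using herm_roots[OF N] by blast
  have injx: "inj_on x {1..N}" using smx strict_mono_on_imp_inj_on by blast
  have P2: "\<exists>v. inj_on v {1..N} \<and> FN N v t = 0"
  proof (intro exI conjI)
    show "inj_on (\<lambda>i. sqrt (2 * t) * x i) {1..N}"
    proof (rule inj_onI)
      fix a b assume "a \<in> {1..N}" "b \<in> {1..N}" "sqrt (2 * t) * x a = sqrt (2 * t) * x b"
      then show "a = b" using sp inj_onD[OF injx] by simp
    qed
    show "FN N (\<lambda>i. sqrt (2 * t) * x i) t = 0"
      by (rule value_roots(1)[OF N t injx rx])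
  qed
  have P1: "\<forall>v. inj_on v {1..N} \<longrightarrow> FN N v t \<le> 0"
  proof (intro allI impI)
    fix v :: "nat \<Rightarrow> real" assume injv: "inj_on v {1..N}"
    obtain \<sigma> where p: "\<sigma> permutes {1..N}" and ord: "\<forall>a\<in>{1..N}. \<forall>b\<in>{1..N}. v a < v b \<longleftrightarrow> \<sigma> a < \<sigma> b"
      using rank_perm[OF injv] by blast
    define u where "u i = x (\<sigma> i)" for i
    have pr: "inj_on u {1..N} \<and> (\<forall>i\<in>{1..N}. poly (herm N) (u i) = 0)"
      unfolding u_def using permroots[OF smx rx p] .
    define w where "w i = sqrt (2 * t) * u i" for i
    have F0: "FN N w t = 0"
      using value_roots(1)[OF N t, of u] pr unfolding w_def by simp
    have cw: "\<forall>a\<in>{1..N}. (\<Sum>b\<in>{1..N}-{a}. 1 / (w a - w b)) = w a / (2*t)"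
      using value_roots(2)[OF N t, of u] pr unfolding w_def by simp
    have sw: "(\<Sum>a\<in>{1..N}. (w a)^2) = t * (real N * (real N - 1))"
      using value_roots(3)[OF N t, of u] pr unfolding w_def by simp
    have injw: "inj_on w {1..N}"
    proof (rule inj_onI)
      fix a b assume "a \<in> {1..N}" "b \<in> {1..N}" "w a = w b"
      then show "a = b" using sp inj_onD[of u "{1..N}" a b] pr unfolding w_def by simp
    qed
    have ordw: "\<forall>a\<in>{1..N}. \<forall>b\<in>{1..N}. v a < v b \<longleftrightarrow> w a < w b"
    proof (intro ballI)
      fix a b assume a: "a \<in> {1..N}" and b: "b \<in> {1..N}"
      have sa: "\<sigma> a \<in> {1..N}" "\<sigma> b \<in> {1..N}"
        by (simp only: permutes_in_image[OF p], rule a) (simp only: permutes_in_image[OF p], rule b)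
      have "v a < v b \<longleftrightarrow> \<sigma> a < \<sigma> b" using ord a b by blast
      also have "\<dots> \<longleftrightarrow> x (\<sigma> a) < x (\<sigma> b)" using strict_mono_on_less[OF smx sa] by simp
      also have "\<dots> \<longleftrightarrow> w a < w b" using sp by (simp add: w_def u_def)
      finally show "v a < v b \<longleftrightarrow> w a < w b" .
    qed
    have "FN N v t \<le> FN N w t" by (rule tangent[OF t N injv injw ordw cw sw])
    then show "FN N v t \<le> 0" using F0 by simp
  qed
  show ?thesis using P1 P2 P3 by blast
qed


end
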